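(* Let $m\ge2$ and let $W$ be as in the context. Suppose the nonzero eigenvalues of $W$ (counted with algebraic multiplicity) are $\pm i\lambda_1,\dots,\pm i\lambda_r$ with $\lambda_k>0$ (the eigenvalue $0$ then having multiplicity $d-2r$). Then $$\sqrt{\det\mathcal{O}_{m-1}}=m^{\frac d2-r}\prod_{k=1}^r\frac{(1+\lambda_k)^m-(1-\lambda_k)^m}{2\lambda_k}.$$
   Context: $\mathbb{B}_n$ carries the Riemannian metric $\mathring b$ induced by the Bergman Hermitian metric, the standard complex structure $J$, and $\omega_p(\xi,\nu)=\mathring b_p(\xi,J\nu)$. $\Gamma\subseteq\mathbb{B}_n$ is an embedded submanifold of dimension $d$ with inclusion $\iota$, $\gamma:B(0,1)\subset\mathbb{R}^d\to\Gamma$ a parametrization with $p=\gamma(t)$, $G=(g_{jk}(p))$ with $g_{jk}(p)=\mathring b_p(D_p\iota\,\partial_{t_j},D_p\iota\,\partial_{t_k})$ and $H=(h_{jk}(p))$ with $h_{jk}(p)=\omega_p(D_p\iota\,\partial_{t_j},D_p\iota\,\partial_{t_k})$, and $W=G^{-1}H$ (a $d\times d$ real matrix, skew-adjoint with respect to $G$, so its nonzero eigenvalues are purely imaginary in conjugate pairs). $\mathcal{O}_{m-1}$ is the $(m-1)d\times(m-1)d$ complex matrix which, as an $(m-1)\times(m-1)$ block matrix with $d\times d$ blocks, is block tridiagonal with diagonal blocks $2I$, superdiagonal blocks $-I-iW$, subdiagonal blocks $-I+iW$, and all other blocks zero. The square root is the positive one. *)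

theory Defs
  imports Complex_Main "Jordan_Normal_Form.Char_Poly"
begin

text \<open>The block tridiagonal matrix O_{m-1}: (m-1) x (m-1) blocks of size d x d,
  diagonal blocks 2I, superdiagonal blocks -I - iW, subdiagonal blocks -I + iW.\<close>
definition O_mat :: "nat \<Rightarrow> nat \<Rightarrow> real mat \<Rightarrow> complex mat" where
  "O_mat d m W = mat ((m - 1) * d) ((m - 1) * d) (\<lambda>(i, j).
     let a = i div d; b = j div d; p = i mod d; q = j mod d;
         \<delta> = (if p = q then 1 else 0) :: complex
     in if a = b then 2 * \<delta>
        else if b = a + 1 then - \<delta> - \<i> * complex_of_real (W $$ (p, q))
        else if a = b + 1 then - \<delta> + \<i> * complex_of_real (W $$ (p, q))
        else 0)"

end

theory Submission
  imports Defs "Jordan_Normal_Form.Schur_Decomposition"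
begin

definition al :: "nat \<Rightarrow> nat \<Rightarrow> complex" where
  "al a b = (if a = b then 2 else if b = a + 1 \<or> a = b + 1 then -1 else 0)"
definition be :: "nat \<Rightarrow> nat \<Rightarrow> complex" where
  "be a b = (if a = b then 0 else if b = a + 1 then - \<i> else if a = b + 1 then \<i> else 0)"

lemma al_shift[simp]: "al (Suc a) (Suc b) = al a b" by (auto simp: al_def)
lemma be_shift[simp]: "be (Suc a) (Suc b) = be a b" by (auto simp: be_def)

definition Ob :: "nat \<Rightarrow> nat \<Rightarrow> complex mat \<Rightarrow> complex mat \<Rightarrow> complex mat" where
  "Ob d n X Y = mat (n*d) (n*d) (\<lambda>(i,j). al (i div d) (j div d) * X $$ (i mod d, j mod d)
      + be (i div d) (j div d) * Y $$ (i mod d, j mod d))"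

definition BD :: "nat \<Rightarrow> nat \<Rightarrow> complex mat \<Rightarrow> complex mat" where
  "BD d n P = mat (n*d) (n*d) (\<lambda>(i,j). if i div d = j div d then P $$ (i mod d, j mod d) else 0)"

lemma sum_reindex_divmod:
  fixes g :: "nat \<Rightarrow> 'a::comm_monoid_add"
  shows "(\<Sum>k<n*d. g k) = (\<Sum>c<n. \<Sum>r<d. g (c*d + r))"
proof -
  have "(\<Sum>k<n*d. g k) = (\<Sum>c<n. sum g {c*d..<c*d+d})"
    using sum.nat_group[of g d n] by simp
  also have "\<dots> = (\<Sum>c<n. \<Sum>r<d. g (c*d + r))"
  proof (rule sum.cong[OF refl])
    fix c
    show "sum g {c*d..<c*d+d} = (\<Sum>r<d. g (c*d + r))"
      using sum.shift_bounds_nat_ivl[of g 0 "c*d" d] by (simp add: atLeast0LessThan add.commute)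
  qed
  finally show ?thesis .
qed

lemma mult_entry:
  assumes "A \<in> carrier_mat N N" "B \<in> carrier_mat N N" "i < N" "j < N"
  shows "(A * B) $$ (i,j) = (\<Sum>k<N. A $$ (i,k) * B $$ (k,j))"
  using assms by (auto simp: scalar_prod_def atLeast0LessThan intro!: sum.cong)

lemma Ob_carrier[simp]: "Ob d n X Y \<in> carrier_mat (n*d) (n*d)" by (simp add: Ob_def)
lemma BD_carrier[simp]: "BD d n P \<in> carrier_mat (n*d) (n*d)" by (simp add: BD_def)

lemma divmod_lt: assumes "i < n*(d::nat)" shows "i div d < n" "i mod d < d"
  using assms by (auto simp: less_mult_imp_div_less) (metis mod_less_divisor mult_0_right not_less0 zero_less_iff_neq_zero)

lemma BD_Ob:
  assumes P: "P \<in> carrier_mat d d" and X: "X \<in> carrier_mat d d" and Y: "Y \<in> carrier_mat d d"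
  shows "BD d n P * Ob d n X Y = Ob d n (P*X) (P*Y)"
proof (rule eq_matI)
  fix i j assume i: "i < dim_row (Ob d n (P*X) (P*Y))" and j: "j < dim_col (Ob d n (P*X) (P*Y))"
  hence i: "i < n*d" and j: "j < n*d" by (auto simp: Ob_def)
  have dp: "d > 0" using i by (cases d, auto)
  note ii = divmod_lt[OF i] and jj = divmod_lt[OF j]
  have "(BD d n P * Ob d n X Y) $$ (i,j) = (\<Sum>k<n*d. BD d n P $$ (i,k) * Ob d n X Y $$ (k,j))"
    by (rule mult_entry[OF BD_carrier Ob_carrier i j])
  also have "\<dots> = (\<Sum>c<n. \<Sum>r<d. BD d n P $$ (i,c*d+r) * Ob d n X Y $$ (c*d+r,j))"
    by (rule sum_reindex_divmod)
  also have "\<dots> = (\<Sum>c<n. \<Sum>r<d. if i div d = c then P $$ (i mod d, r) * (al c (j div d) * X $$ (r, j mod d)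
      + be c (j div d) * Y $$ (r, j mod d)) else 0)"
  proof (intro sum.cong refl)
    fix c r assume c: "c \<in> {..<n}" and r: "r \<in> {..<d}"
    have lt: "c*d + r < n*d"
    proof -
      have "c*d + r < c*d + d" using r by simp
      also have "\<dots> = Suc c * d" by simp
      also have "\<dots> \<le> n*d" using c by (intro mult_right_mono) auto
      finally show ?thesis .
    qed
    have dm: "(c*d+r) div d = c" "(c*d+r) mod d = r" using r dp by auto
    show "BD d n P $$ (i,c*d+r) * Ob d n X Y $$ (c*d+r,j) = (if i div d = c then P $$ (i mod d, r) * (al c (j div d) * X $$ (r, j mod d)
      + be c (j div d) * Y $$ (r, j mod d)) else 0)"
      using lt i j dm by (simp add: BD_def Ob_def)
  qed
  also have "\<dots> = (\<Sum>r<d. P $$ (i mod d, r) * (al (i div d) (j div d) * X $$ (r, j mod d)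
      + be (i div d) (j div d) * Y $$ (r, j mod d)))"
    using ii by (subst sum.swap) (simp add: sum.delta')
  also have "\<dots> = al (i div d) (j div d) * (\<Sum>r<d. P $$ (i mod d, r) * X $$ (r, j mod d))
      + be (i div d) (j div d) * (\<Sum>r<d. P $$ (i mod d, r) * Y $$ (r, j mod d))"
    by (simp add: sum_distrib_left sum.distrib algebra_simps)
  also have "\<dots> = Ob d n (P*X) (P*Y) $$ (i,j)"
    using i j ii jj P X Y mult_entry[OF P X ii(2) jj(2)] mult_entry[OF P Y ii(2) jj(2)]
    by (simp add: Ob_def del: index_mult_mat)
  finally show "(BD d n P * Ob d n X Y) $$ (i,j) = Ob d n (P*X) (P*Y) $$ (i,j)" .
qed (auto simp: Ob_def BD_def)

lemma Ob_BD:
  assumes Q: "Q \<in> carrier_mat d d" and X: "X \<in> carrier_mat d d" and Y: "Y \<in> carrier_mat d d"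
  shows "Ob d n X Y * BD d n Q = Ob d n (X*Q) (Y*Q)"
proof (rule eq_matI)
  fix i j assume i: "i < dim_row (Ob d n (X*Q) (Y*Q))" and j: "j < dim_col (Ob d n (X*Q) (Y*Q))"
  hence i: "i < n*d" and j: "j < n*d" by (auto simp: Ob_def)
  have dp: "d > 0" using i by (cases d, auto)
  note ii = divmod_lt[OF i] and jj = divmod_lt[OF j]
  have "(Ob d n X Y * BD d n Q) $$ (i,j) = (\<Sum>k<n*d. Ob d n X Y $$ (i,k) * BD d n Q $$ (k,j))"
    by (rule mult_entry[OF Ob_carrier BD_carrier i j])
  also have "\<dots> = (\<Sum>c<n. \<Sum>r<d. Ob d n X Y $$ (i,c*d+r) * BD d n Q $$ (c*d+r,j))"
    by (rule sum_reindex_divmod)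
  also have "\<dots> = (\<Sum>c<n. \<Sum>r<d. if j div d = c then (al (i div d) c * X $$ (i mod d, r)
      + be (i div d) c * Y $$ (i mod d, r)) * Q $$ (r, j mod d) else 0)"
  proof (intro sum.cong refl)
    fix c r assume c: "c \<in> {..<n}" and r: "r \<in> {..<d}"
    have lt: "c*d + r < n*d"
    proof -
      have "c*d + r < c*d + d" using r by simp
      also have "\<dots> = Suc c * d" by simp
      also have "\<dots> \<le> n*d" using c by (intro mult_right_mono) auto
      finally show ?thesis .
    qed
    have dm: "(c*d+r) div d = c" "(c*d+r) mod d = r" using r dp by auto
    show "Ob d n X Y $$ (i,c*d+r) * BD d n Q $$ (c*d+r,j) = (if j div d = c then (al (i div d) c * X $$ (i mod d, r)
      + be (i div d) c * Y $$ (i mod d, r)) * Q $$ (r, j mod d) else 0)"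
      using lt i j dm by (auto simp: BD_def Ob_def)
  qed
  also have "\<dots> = (\<Sum>r<d. (al (i div d) (j div d) * X $$ (i mod d, r)
      + be (i div d) (j div d) * Y $$ (i mod d, r)) * Q $$ (r, j mod d))"
    using jj by (subst sum.swap) (simp add: sum.delta')
  also have "\<dots> = al (i div d) (j div d) * (\<Sum>r<d. X $$ (i mod d, r) * Q $$ (r, j mod d))
      + be (i div d) (j div d) * (\<Sum>r<d. Y $$ (i mod d, r) * Q $$ (r, j mod d))"
    by (simp add: sum_distrib_left sum.distrib algebra_simps)
  also have "\<dots> = Ob d n (X*Q) (Y*Q) $$ (i,j)"
    using i j ii jj Q X Y mult_entry[OF X Q ii(2) jj(2)] mult_entry[OF Y Q ii(2) jj(2)]
    by (simp add: Ob_def del: index_mult_mat)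
  finally show "(Ob d n X Y * BD d n Q) $$ (i,j) = Ob d n (X*Q) (Y*Q) $$ (i,j)" .
qed (auto simp: Ob_def BD_def)

lemma BD_BD:
  assumes P: "P \<in> carrier_mat d d" and Q: "Q \<in> carrier_mat d d"
  shows "BD d n P * BD d n Q = BD d n (P*Q)"
proof (rule eq_matI)
  fix i j assume i: "i < dim_row (BD d n (P*Q))" and j: "j < dim_col (BD d n (P*Q))"
  hence i: "i < n*d" and j: "j < n*d" by (auto simp: BD_def)
  have dp: "d > 0" using i by (cases d, auto)
  note ii = divmod_lt[OF i] and jj = divmod_lt[OF j]
  have "(BD d n P * BD d n Q) $$ (i,j) = (\<Sum>k<n*d. BD d n P $$ (i,k) * BD d n Q $$ (k,j))"
    by (rule mult_entry[OF BD_carrier BD_carrier i j])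
  also have "\<dots> = (\<Sum>c<n. \<Sum>r<d. BD d n P $$ (i,c*d+r) * BD d n Q $$ (c*d+r,j))"
    by (rule sum_reindex_divmod)
  also have "\<dots> = (\<Sum>c<n. \<Sum>r<d. if i div d = c then (if j div d = c then P $$ (i mod d, r) * Q $$ (r, j mod d) else 0) else 0)"
  proof (intro sum.cong refl)
    fix c r assume c: "c \<in> {..<n}" and r: "r \<in> {..<d}"
    have lt: "c*d + r < n*d"
    proof -
      have "c*d + r < c*d + d" using r by simp
      also have "\<dots> = Suc c * d" by simp
      also have "\<dots> \<le> n*d" using c by (intro mult_right_mono) auto
      finally show ?thesis .
    qed
    have dm: "(c*d+r) div d = c" "(c*d+r) mod d = r" using r dp by auto
    show "BD d n P $$ (i,c*d+r) * BD d n Q $$ (c*d+r,j) = (if i div d = c then (if j div d = c then P $$ (i mod d, r) * Q $$ (r, j mod d) else 0) else 0)"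
      using lt i j dm by (auto simp: BD_def)
  qed
  also have "\<dots> = (if i div d = j div d then (\<Sum>r<d. P $$ (i mod d, r) * Q $$ (r, j mod d)) else 0)"
    using ii by (subst sum.swap) (simp add: sum.delta')
  also have "\<dots> = BD d n (P*Q) $$ (i,j)"
    using i j ii jj P Q mult_entry[OF P Q ii(2) jj(2)]
    by (simp add: BD_def del: index_mult_mat)
  finally show "(BD d n P * BD d n Q) $$ (i,j) = BD d n (P*Q) $$ (i,j)" .
qed (auto simp: BD_def)

lemma BD_one: "BD d n (1\<^sub>m d) = 1\<^sub>m (n*d)"
proof (rule eq_matI)
  fix i j assume "i < dim_row (1\<^sub>m (n*d))" "j < dim_col (1\<^sub>m (n * d))"
  hence i: "i < n*d" and j: "j < n*d" by auto
  note ii = divmod_lt[OF i] and jj = divmod_lt[OF j]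
  have "(i div d = j div d \<and> i mod d = j mod d) = (i = j)"
    by (metis div_mult_mod_eq)
  thus "BD d n (1\<^sub>m d) $$ (i,j) = 1\<^sub>m (n*d) $$ (i,j)"
    using i j ii jj by (auto simp: BD_def)
qed (auto simp: BD_def)

lemma det_similar_Ob:
  assumes sim: "similar_mat_wit A B P Q" and A: "A \<in> carrier_mat d d"
  shows "det (Ob d n (1\<^sub>m d) A) = det (Ob d n (1\<^sub>m d) B)"
proof -
  from sim A have B: "B \<in> carrier_mat d d" and P: "P \<in> carrier_mat d d" and Q: "Q \<in> carrier_mat d d"
    and PQ: "P * Q = 1\<^sub>m d" and AB: "A = P * B * Q"
    unfolding similar_mat_wit_def Let_def by auto
  have one: "P * 1\<^sub>m d * Q = 1\<^sub>m d" using P Q PQ by simp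
  have "Ob d n (1\<^sub>m d) A = Ob d n (P * 1\<^sub>m d * Q) (P * B * Q)" using one AB by simp
  also have "\<dots> = BD d n P * Ob d n (1\<^sub>m d) B * BD d n Q"
    using P Q B by (simp add: BD_Ob Ob_BD)
  finally have eq: "Ob d n (1\<^sub>m d) A = BD d n P * Ob d n (1\<^sub>m d) B * BD d n Q" .
  have "det (BD d n P) * det (BD d n Q) = 1"
    using det_mult[OF BD_carrier[of d n P] BD_carrier[of d n Q]] BD_BD[OF P Q] PQ BD_one by simp
  thus ?thesis unfolding eq
    by (simp add: det_mult[OF mult_carrier_mat[OF BD_carrier Ob_carrier] BD_carrier] det_mult[OF BD_carrier Ob_carrier])
qed


definition Obp :: "nat \<Rightarrow> nat \<Rightarrow> complex mat \<Rightarrow> complex mat \<Rightarrow> complex mat" where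
  "Obp d n X Y = mat (d*n) (d*n) (\<lambda>(i,j). al (i mod n) (j mod n) * X $$ (i div n, j div n)
      + be (i mod n) (j mod n) * Y $$ (i div n, j div n))"

definition tri :: "nat \<Rightarrow> complex \<Rightarrow> complex \<Rightarrow> complex mat" where
  "tri n x y = mat n n (\<lambda>(a,b). al a b * x + be a b * y)"

lemma det_perm_sym:
  assumes A: "(A :: complex mat) \<in> carrier_mat N N" and p: "p permutes {0..<N}"
  shows "det (mat N N (\<lambda>(i,j). A $$ (p i, p j))) = det A"
proof -
  define B where "B = mat N N (\<lambda>(i,j). A $$ (p i, j))"
  have B: "B \<in> carrier_mat N N" by (simp add: B_def)
  have dB: "det B = signof p * det A" unfolding B_def by (rule det_permute_rows[OF A p])
  have pl: "\<And>i. i < N \<Longrightarrow> p i < N" using p by (meson atLeastLessThan_iff permutes_in_image zero_le)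
  have eq: "transpose_mat (mat N N (\<lambda>(i,j). A $$ (p i, p j))) = mat N N (\<lambda>(i,j). transpose_mat B $$ (p i, j))"
    by (rule eq_matI) (auto simp: B_def pl)
  have "det (mat N N (\<lambda>(i,j). A $$ (p i, p j))) = det (transpose_mat (mat N N (\<lambda>(i,j). A $$ (p i, p j))))"
    using det_transpose[of "mat N N (\<lambda>(i,j). A $$ (p i, p j))" N] by simp
  also have "\<dots> = signof p * det (transpose_mat B)" unfolding eq
    by (rule det_permute_rows[OF _ p]) (use B in auto)
  also have "\<dots> = signof p * signof p * det A" using dB B by (simp add: det_transpose)
  also have "\<dots> = det A"
  proof -
    have "(signof p :: complex) * signof p = of_int (sign p * sign p)" by (simp only: of_int_mult)
    also have "\<dots> = 1" by (simp only: sign_idempotent of_int_1)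
    finally show ?thesis by simp
  qed
  finally show ?thesis .
qed

lemma det_Ob_Obp:
  assumes n: "n > 0"
  shows "det (Ob d n X Y) = det (Obp d n X Y)"
proof (cases "d = 0")
  case True
  then show ?thesis by (simp add: Ob_def Obp_def)
next
  case False
  hence dp: "d > 0" by simp
  define N where "N = n*d"
  define p where "p = (\<lambda>i. if i < N then (i mod n)*d + i div n else i)"
  define q where "q = (\<lambda>k. if k < N then (k mod d)*n + k div d else k)"
  have bnd: "\<And>a b. a < n \<Longrightarrow> b < d \<Longrightarrow> a*d + b < N"
  proof -
    fix a b assume a: "a < n" and b: "b < d"
    have "a*d + b < a*d + d" using b by simp
    also have "\<dots> = Suc a * d" by simp
    also have "\<dots> \<le> n*d" using a by (intro mult_right_mono) auto
    finally show "a*d + b < N" unfolding N_def .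
  qed
  have bnd2: "\<And>a b. a < d \<Longrightarrow> b < n \<Longrightarrow> a*n + b < N"
  proof -
    fix a b assume a: "a < d" and b: "b < n"
    have "a*n + b < a*n + n" using b by simp
    also have "\<dots> = Suc a * n" by simp
    also have "\<dots> \<le> d*n" using a by (intro mult_right_mono) auto
    finally show "a*n + b < N" unfolding N_def by (simp add: mult.commute)
  qed
  have ilt: "\<And>i. i < N \<Longrightarrow> i div n < d \<and> i mod n < n"
    using n unfolding N_def by (metis divmod_lt mult.commute)
  have klt: "\<And>k. k < N \<Longrightarrow> k div d < n \<and> k mod d < d"
    unfolding N_def using divmod_lt by blast
  have pN: "\<And>i. i < N \<Longrightarrow> p i < N \<and> p i div d = i mod n \<and> p i mod d = i div n"
    using ilt bnd dp unfolding p_def by auto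
  have qN: "\<And>k. k < N \<Longrightarrow> q k < N \<and> q k div n = k mod d \<and> q k mod n = k div d"
    using klt bnd2 n unfolding q_def by auto
  have perm: "p permutes {0..<N}"
  proof (rule bij_imp_permutes)
    show "bij_betw p {0..<N} {0..<N}"
    proof (rule bij_betw_byWitness[where f'=q])
      show "\<forall>a\<in>{0..<N}. q (p a) = a"
      proof
        fix a assume "a \<in> {0..<N}" hence a: "a < N" by simp
        from pN[OF a] have "q (p a) = (a div n) * n + a mod n" unfolding q_def by simp
        also have "\<dots> = a" by simp
        finally show "q (p a) = a" .
      qed
      show "\<forall>a\<in>{0..<N}. p (q a) = a"
      proof
        fix a assume "a \<in> {0..<N}" hence a: "a < N" by simp
        from qN[OF a] have "p (q a) = (a div d) * d + a mod d" unfolding p_def by simp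
        also have "\<dots> = a" by simp
        finally show "p (q a) = a" .
      qed
      show "p ` {0..<N} \<subseteq> {0..<N}" using pN by auto
      show "q ` {0..<N} \<subseteq> {0..<N}" using qN by auto
    qed
    show "\<And>x. x \<notin> {0..<N} \<Longrightarrow> p x = x" unfolding p_def by auto
  qed
  have eq: "Obp d n X Y = mat N N (\<lambda>(i,j). Ob d n X Y $$ (p i, p j))"
  proof (rule eq_matI)
    fix i j assume "i < dim_row (mat N N (\<lambda>(i,j). Ob d n X Y $$ (p i, p j)))"
      "j < dim_col (mat N N (\<lambda>(i,j). Ob d n X Y $$ (p i, p j)))"
    hence i: "i < N" and j: "j < N" by auto
    show "Obp d n X Y $$ (i, j) = mat N N (\<lambda>(i,j). Ob d n X Y $$ (p i, p j)) $$ (i, j)"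
      using pN[OF i] pN[OF j] i j unfolding Obp_def Ob_def N_def by (simp add: mult.commute)
  qed (auto simp: Obp_def N_def)
  show ?thesis unfolding eq
    by (rule det_perm_sym[symmetric, OF _ perm]) (simp add: N_def)
qed


lemma det_Obp_tri:
  assumes n: "n > 0"
  shows "X \<in> carrier_mat d d \<Longrightarrow> Y \<in> carrier_mat d d \<Longrightarrow> upper_triangular X \<Longrightarrow> upper_triangular Y \<Longrightarrow>
    det (Obp d n X Y) = (\<Prod>p<d. det (tri n (X $$ (p,p)) (Y $$ (p,p))))"
proof (induction d arbitrary: X Y)
  case 0
  have "Obp 0 n X Y = 1\<^sub>m 0" by (rule eq_matI) (auto simp: Obp_def)
  then show ?case by simp
next
  case (Suc d)
  define X' where "X' = mat d d (\<lambda>(p,q). X $$ (Suc p, Suc q))"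
  define Y' where "Y' = mat d d (\<lambda>(p,q). Y $$ (Suc p, Suc q))"
  define A2 where "A2 = mat n (d*n) (\<lambda>(i,j). Obp (Suc d) n X Y $$ (i, j+n))"
  have X': "X' \<in> carrier_mat d d" "upper_triangular X'"
    using Suc.prems by (auto simp: X'_def upper_triangular_def)
  have Y': "Y' \<in> carrier_mat d d" "upper_triangular Y'"
    using Suc.prems by (auto simp: Y'_def upper_triangular_def)
  have IH: "det (Obp d n X' Y') = (\<Prod>p<d. det (tri n (X' $$ (p,p)) (Y' $$ (p,p))))"
    using Suc.IH X' Y' by blast
  have eq: "Obp (Suc d) n X Y = four_block_mat (tri n (X $$ (0,0)) (Y $$ (0,0))) A2 (0\<^sub>m (d*n) n) (Obp d n X' Y')"
  proof (rule eq_matI)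
    fix i j assume "i < dim_row (four_block_mat (tri n (X $$ (0,0)) (Y $$ (0,0))) A2 (0\<^sub>m (d*n) n) (Obp d n X' Y'))"
      "j < dim_col (four_block_mat (tri n (X $$ (0,0)) (Y $$ (0,0))) A2 (0\<^sub>m (d*n) n) (Obp d n X' Y'))"
    hence i: "i < n + d*n" and j: "j < n + d*n" by (auto simp: tri_def Obp_def A2_def)
    show "Obp (Suc d) n X Y $$ (i,j) = four_block_mat (tri n (X $$ (0,0)) (Y $$ (0,0))) A2 (0\<^sub>m (d*n) n) (Obp d n X' Y') $$ (i,j)"
    proof (cases "i < n")
      case True
      show ?thesis
      proof (cases "j < n")
        case True
        with \<open>i < n\<close> show ?thesis using i j by (simp add: Obp_def tri_def A2_def)
      next
        case False
        with \<open>i < n\<close> show ?thesis using i j by (simp add: Obp_def tri_def A2_def)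
      qed
    next
      case False
      hence idiv: "i div n = Suc ((i-n) div n)" "i mod n = (i-n) mod n" using n le_div_geq le_mod_geq by auto
      have i': "i - n < d*n" using i False by auto
      have idl: "(i-n) div n < d" using i' by (metis divmod_lt(1) mult.commute)
      show ?thesis
      proof (cases "j < n")
        case True
        have "X $$ (i div n, j div n) = 0" "Y $$ (i div n, j div n) = 0"
          using True idiv idl Suc.prems by (auto intro!: upper_triangularD)
        with True False show ?thesis using i j by (simp add: Obp_def tri_def)
      next
        case False
        hence jdiv: "j div n = Suc ((j-n) div n)" "j mod n = (j-n) mod n" using n le_div_geq le_mod_geq by auto
        have j': "j - n < d*n" using j False by auto
        have jdl: "(j-n) div n < d" using j' by (metis divmod_lt(1) mult.commute)
        show ?thesis using \<open>\<not> i < n\<close> False i j i' j' idiv jdiv idl jdl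
          by (simp add: Obp_def X'_def Y'_def tri_def)
      qed
    qed
  qed (auto simp: tri_def Obp_def A2_def)
  have "det (Obp (Suc d) n X Y) = det (tri n (X $$ (0,0)) (Y $$ (0,0))) * det (Obp d n X' Y')"
    unfolding eq by (rule det_four_block_mat_lower_left_zero) (auto simp: tri_def A2_def Obp_def)
  also have "\<dots> = (\<Prod>p<Suc d. det (tri n (X $$ (p,p)) (Y $$ (p,p))))"
    unfolding IH prod.lessThan_Suc_shift by (simp add: X'_def Y'_def)
  finally show ?case .
qed


definition Sx :: "complex \<Rightarrow> complex \<Rightarrow> nat \<Rightarrow> complex" where
  "Sx x y n = (\<Sum>i<Suc n. y^(n-i) * x^i)"

lemma Sx_Suc: "Sx x y (Suc n) = y * Sx x y n + x^(Suc n)"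
proof -
  have "Sx x y (Suc n) = (\<Sum>i<Suc n. y^(Suc n-i) * x^i) + x^(Suc n)"
    unfolding Sx_def by simp
  also have "(\<Sum>i<Suc n. y^(Suc n-i) * x^i) = y * Sx x y n"
    unfolding Sx_def sum_distrib_left
    by (intro sum.cong refl) (simp add: Suc_diff_le)
  finally show ?thesis .
qed

lemma Sx_rec: "Sx x y (Suc (Suc n)) = (x + y) * Sx x y (Suc n) - x * y * Sx x y n"
  unfolding Sx_Suc by (simp add: algebra_simps)

lemma tri_carrier[simp]: "tri n x y \<in> carrier_mat n n" by (simp add: tri_def)

lemma det_tri_rec:
  "det (tri (Suc (Suc n)) 1 c) = 2 * det (tri (Suc n) 1 c) - (1 + \<i>*c) * (1 - \<i>*c) * det (tri n 1 c)"
proof -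
  let ?A = "tri (Suc (Suc n)) 1 c"
  have "det ?A = (\<Sum>j<Suc (Suc n). ?A $$ (0,j) * cofactor ?A 0 j)"
    by (rule laplace_expansion_row) auto
  also have "\<dots> = ?A $$ (0,0) * cofactor ?A 0 0 + ?A $$ (0,1) * cofactor ?A 0 1"
  proof -
    have "(\<Sum>j<Suc (Suc n). ?A $$ (0,j) * cofactor ?A 0 j) = (\<Sum>j\<in>{0,1}. ?A $$ (0,j) * cofactor ?A 0 j)"
      by (rule sum.mono_neutral_right) (auto simp: tri_def al_def be_def)
    thus ?thesis by simp
  qed
  finally have e0: "det ?A = ?A $$ (0,0) * cofactor ?A 0 0 + ?A $$ (0,1) * cofactor ?A 0 1" .
  have d0: "mat_delete ?A 0 0 = tri (Suc n) 1 c"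
    by (rule eq_matI) (auto simp: mat_delete_def tri_def)
  have d1: "mat_delete ?A 0 1 = four_block_mat (mat 1 1 (\<lambda>_. -1 + \<i>*c)) (mat 1 n (\<lambda>(i,j). ?A $$ (1, j+2))) (0\<^sub>m n 1) (tri n 1 c)"
  proof (rule eq_matI)
    fix i j assume "i < dim_row (four_block_mat (mat 1 1 (\<lambda>_. -1 + \<i>*c)) (mat 1 n (\<lambda>(i,j). ?A $$ (1, j+2))) (0\<^sub>m n 1) (tri n 1 c))"
      "j < dim_col (four_block_mat (mat 1 1 (\<lambda>_. -1 + \<i>*c)) (mat 1 n (\<lambda>(i,j). ?A $$ (1, j+2))) (0\<^sub>m n 1) (tri n 1 c))"
    hence i: "i < Suc n" and j: "j < Suc n" by (auto simp: tri_def)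
    show "mat_delete ?A 0 1 $$ (i,j) = four_block_mat (mat 1 1 (\<lambda>_. -1 + \<i>*c)) (mat 1 n (\<lambda>(i,j). ?A $$ (1, j+2))) (0\<^sub>m n 1) (tri n 1 c) $$ (i,j)"
      using i j by (cases i; cases j) (auto simp: mat_delete_def tri_def al_def be_def)
  qed (auto simp: mat_delete_def tri_def)
  have "det (mat_delete ?A 0 1) = (-1 + \<i>*c) * det (tri n 1 c)"
    unfolding d1
    by (subst det_four_block_mat_lower_left_zero[of _ 1 _ n]) (auto simp: det_single)
  hence "det ?A = 2 * det (tri (Suc n) 1 c) + (-1 - \<i>*c) * (- ((-1 + \<i>*c) * det (tri n 1 c)))"
    using e0 d0 unfolding cofactor_def by (simp add: tri_def al_def be_def)
  thus ?thesis by (simp add: algebra_simps)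
qed

lemma det_tri: "det (tri n 1 c) = Sx (1 + \<i>*c) (1 - \<i>*c) n"
proof (induction n rule: less_induct)
  case (less n)
  show ?case
  proof (cases n)
    case 0
    have "tri 0 1 c = 1\<^sub>m 0" by (rule eq_matI) (auto simp: tri_def)
    thus ?thesis using 0 by (simp add: Sx_def)
  next
    case (Suc k)
    show ?thesis
    proof (cases k)
      case 0
      have "det (tri 1 1 c) = 2" by (subst det_single) (auto simp: tri_def al_def be_def)
      thus ?thesis using Suc 0 by (simp add: Sx_def)
    next
      case (Suc l)
      have "det (tri n 1 c) = 2 * det (tri (Suc l) 1 c) - (1 + \<i>*c) * (1 - \<i>*c) * det (tri l 1 c)"
        using det_tri_rec \<open>n = Suc k\<close> Suc by simp
      also have "\<dots> = 2 * Sx (1 + \<i>*c) (1 - \<i>*c) (Suc l) - (1 + \<i>*c) * (1 - \<i>*c) * Sx (1 + \<i>*c) (1 - \<i>*c) l"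
        using less.IH \<open>n = Suc k\<close> Suc by simp
      also have "\<dots> = Sx (1 + \<i>*c) (1 - \<i>*c) n"
        using Sx_rec[of "1 + \<i>*c" "1 - \<i>*c" l] \<open>n = Suc k\<close> Suc by simp
      finally show ?thesis .
    qed
  qed
qed


lemma Sx_sym: "Sx x y n = Sx y x n"
  unfolding Sx_def
  by (subst sum.nat_diff_reindex[symmetric]) (auto intro!: sum.cong simp: Suc_diff_le mult.commute)

lemma Sx_real: "Sx (complex_of_real a) (complex_of_real b) n = complex_of_real (\<Sum>i<Suc n. b^(n-i) * a^i)"
  unfolding Sx_def by simp

lemma Sx_lam:
  assumes l: "(l::real) > 0"
  shows "(\<Sum>i<Suc n. (1-l)^(n-i) * (1+l)^i) = ((1+l)^Suc n - (1-l)^Suc n) / (2*l)"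
    and "((1+l)^Suc n - (1-l)^Suc n) / (2*l) > 0"
proof -
  have "(1+l)^Suc n - (1-l)^Suc n = ((1+l) - (1-l)) * (\<Sum>i<Suc n. (1-l)^(Suc n - Suc i) * (1+l)^i)"
    by (rule power_diff_sumr2)
  thus "(\<Sum>i<Suc n. (1-l)^(n-i) * (1+l)^i) = ((1+l)^Suc n - (1-l)^Suc n) / (2*l)"
    using l by simp
  have "(1-l)^Suc n \<le> \<bar>1-l\<bar>^Suc n" by (metis power_abs abs_ge_self)
  also have "\<bar>1-l\<bar>^Suc n < (1+l)^Suc n"
    by (rule power_strict_mono) (use l in auto)
  finally show "((1+l)^Suc n - (1-l)^Suc n) / (2*l) > 0" using l by simp
qed

lemma prod_list_concat_map:
  "prod_list (map g (concat (map f xs))) = prod_list (map (\<lambda>x. prod_list (map g (f x))) xs)"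
  by (induction xs) auto

lemma O_mat_Ob:
  assumes W: "W \<in> carrier_mat d d"
  shows "O_mat d m W = Ob d (m-1) (1\<^sub>m d) (map_mat complex_of_real W)"
proof (rule eq_matI)
  fix i j assume "i < dim_row (Ob d (m-1) (1\<^sub>m d) (map_mat complex_of_real W))"
    "j < dim_col (Ob d (m-1) (1\<^sub>m d) (map_mat complex_of_real W))"
  hence i: "i < (m-1)*d" and j: "j < (m-1)*d" by (auto simp: Ob_def)
  note ii = divmod_lt[OF i] and jj = divmod_lt[OF j]
  show "O_mat d m W $$ (i,j) = Ob d (m-1) (1\<^sub>m d) (map_mat complex_of_real W) $$ (i,j)"
    using i j ii jj W by (auto simp: O_mat_def Ob_def Let_def al_def be_def)
qed (auto simp: O_mat_def Ob_def)

theorem mainTheorem16: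
  fixes d m r :: nat and G H W :: "real mat" and lam :: "nat \<Rightarrow> real"
  assumes "m \<ge> 2"
    and G_carrier: "G \<in> carrier_mat d d" and G_sym: "transpose_mat G = G"
    and G_posdef: "\<forall>v \<in> carrier_vec d. v \<noteq> 0\<^sub>v d \<longrightarrow> v \<bullet> (G *\<^sub>v v) > 0"
    and H_carrier: "H \<in> carrier_mat d d" and H_skew: "transpose_mat H = - H"
    and W_carrier: "W \<in> carrier_mat d d" and W_def: "G * W = H"
    and lam_pos: "\<forall>k < r. lam k > 0"
    and eigs: "char_poly (map_mat complex_of_real W) =
       [:0, 1:] ^ (d - 2 * r) * (\<Prod>k<r. [:- (\<i> * complex_of_real (lam k)), 1:] * [:\<i> * complex_of_real (lam k), 1:])"
  shows "Im (det (O_mat d m W)) = 0 \<and> Re (det (O_mat d m W)) \<ge> 0 \<and>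
    sqrt (Re (det (O_mat d m W))) =
      real m powr (real d / 2 - real r) *
      (\<Prod>k<r. ((1 + lam k) ^ m - (1 - lam k) ^ m) / (2 * lam k))"
proof -
  define n where "n = m - 1"
  have n: "n > 0" and mn: "m = Suc n" using assms(1) unfolding n_def by auto
  define Wc where "Wc = map_mat complex_of_real W"
  have Wc: "Wc \<in> carrier_mat d d" using W_carrier by (simp add: Wc_def)
  define es where "es = replicate (d - 2*r) (0::complex) @
     concat (map (\<lambda>k. [\<i> * complex_of_real (lam k), - (\<i> * complex_of_real (lam k))]) [0..<r])"
  have cp: "char_poly Wc = (\<Prod>e\<leftarrow>es. [:- e, 1:])"
  proof -
    have "(\<Prod>e\<leftarrow>es. [:- e, 1:]) = [:0, 1:] ^ (d - 2 * r) *
      prod_list (map (\<lambda>k. [:- (\<i> * complex_of_real (lam k)), 1:] * [:\<i> * complex_of_real (lam k), 1:]) [0..<r])"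
      unfolding es_def by (simp add: prod_list_concat_map)
    also have "prod_list (map (\<lambda>k. [:- (\<i> * complex_of_real (lam k)), 1:] * [:\<i> * complex_of_real (lam k), 1:]) [0..<r])
       = (\<Prod>k<r. [:- (\<i> * complex_of_real (lam k)), 1:] * [:\<i> * complex_of_real (lam k), 1:])"
      by (simp add: prod.distinct_set_conv_list[symmetric] atLeast0LessThan)
    finally show ?thesis using eigs unfolding Wc_def by simp
  qed
  have len: "length es = d"
    using degree_monic_char_poly[OF Wc] degree_linear_factors[of uminus es] cp by simp
  have "length (concat (map (\<lambda>k. [\<i> * complex_of_real (lam k), - (\<i> * complex_of_real (lam k))]) [0..<r])) = 2*r"
    by (induction r) auto
  hence d2r: "2*r \<le> d" using len unfolding es_def by simp
  obtain B P Q where sd: "schur_decomposition Wc es = (B,P,Q)" by (cases "schur_decomposition Wc es") auto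
  from schur_decomposition[OF Wc cp sd]
  have sim: "similar_mat_wit Wc B P Q" and ut: "upper_triangular B" and dg: "diag_mat B = es" by auto
  have B: "B \<in> carrier_mat d d" using sim Wc unfolding similar_mat_wit_def Let_def by auto
  define g where "g e = Sx (1 + \<i>*e) (1 - \<i>*e) n" for e
  have "det (O_mat d m W) = det (Ob d n (1\<^sub>m d) Wc)"
    using O_mat_Ob[OF W_carrier] unfolding n_def Wc_def by simp
  also have "\<dots> = det (Ob d n (1\<^sub>m d) B)" by (rule det_similar_Ob[OF sim Wc])
  also have "\<dots> = det (Obp d n (1\<^sub>m d) B)" by (rule det_Ob_Obp[OF n])
  also have "\<dots> = (\<Prod>p<d. det (tri n ((1\<^sub>m d) $$ (p,p)) (B $$ (p,p))))"
    by (rule det_Obp_tri[OF n]) (use B ut in \<open>auto simp: upper_triangular_def\<close>)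
  also have "\<dots> = (\<Prod>p<d. g (B $$ (p,p)))"
    by (intro prod.cong refl) (simp add: det_tri g_def)
  also have "\<dots> = prod_list (map g es)"
    unfolding dg[symmetric] diag_mat_def using B
    by (simp add: prod.distinct_set_conv_list[symmetric] atLeast0LessThan)
  also have "\<dots> = g 0 ^ (d - 2*r) * (\<Prod>k<r. g (\<i> * complex_of_real (lam k)) * g (- (\<i> * complex_of_real (lam k))))"
    unfolding es_def by (simp add: prod_list_concat_map prod.distinct_set_conv_list[symmetric] atLeast0LessThan)
  finally have det1: "det (O_mat d m W) = g 0 ^ (d - 2*r) * (\<Prod>k<r. g (\<i> * complex_of_real (lam k)) * g (- (\<i> * complex_of_real (lam k))))" .
  define F where "F k = ((1 + lam k) ^ m - (1 - lam k) ^ m) / (2 * lam k)" for k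
  have g0: "g 0 = complex_of_real (real m)"
    unfolding g_def Sx_def mn by simp
  have gl: "g (\<i> * complex_of_real (lam k)) * g (- (\<i> * complex_of_real (lam k))) = complex_of_real (F k ^ 2)"
    and Fpos: "F k > 0" if k: "k < r" for k
  proof -
    have l: "lam k > 0" using lam_pos k by auto
    have e1: "g (- (\<i> * complex_of_real (lam k))) = complex_of_real (F k)"
      unfolding g_def F_def mn Sx_lam(1)[OF l, symmetric]
      by (simp add: Sx_def)
    have e2: "g (\<i> * complex_of_real (lam k)) = complex_of_real (F k)"
      unfolding g_def F_def mn Sx_lam(1)[OF l, symmetric]
      by (subst Sx_sym) (simp add: Sx_def)
    show "g (\<i> * complex_of_real (lam k)) * g (- (\<i> * complex_of_real (lam k))) = complex_of_real (F k ^ 2)"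
      unfolding e1 e2 by (simp add: power2_eq_square)
    show "F k > 0" unfolding F_def mn by (rule Sx_lam(2)[OF l])
  qed
  have det2: "det (O_mat d m W) = complex_of_real (real m ^ (d - 2*r) * (\<Prod>k<r. F k) ^ 2)"
    unfolding det1 g0 by (simp add: gl power_mult_distrib prod_power_distrib[symmetric])
  have mpos: "real m > 0" using mn by simp
  have pw: "(real m powr (real d / 2 - real r)) ^ 2 = real m ^ (d - 2*r)"
  proof -
    have "(real m powr (real d / 2 - real r)) ^ 2 = real m powr ((real d / 2 - real r) + (real d / 2 - real r))"
      unfolding power2_eq_square by (rule powr_add[symmetric])
    also have "(real d / 2 - real r) + (real d / 2 - real r) = 2 * (real d / 2 - real r)" by simp
    also have "2 * (real d / 2 - real r) = real (d - 2*r)" using d2r by simp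
    also have "real m powr real (d - 2*r) = real m ^ (d - 2*r)" using mpos by (simp add: powr_realpow)
    finally show ?thesis .
  qed
  have Pp: "(\<Prod>k<r. F k) > 0" using Fpos by (intro prod_pos) auto
  have "Re (det (O_mat d m W)) = (real m powr (real d / 2 - real r) * (\<Prod>k<r. F k)) ^ 2"
    unfolding det2 Re_complex_of_real power_mult_distrib pw ..
  moreover have "real m powr (real d / 2 - real r) * (\<Prod>k<r. F k) \<ge> 0" using Pp by simp
  moreover have "Im (det (O_mat d m W)) = 0" unfolding det2 Im_complex_of_real ..
  ultimately show ?thesis unfolding F_def by simp
qed

end
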